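(* Let $K$ be a real quadratic field, $\mathcal{O}_K^+$ the set of totally positive algebraic integers of $K$, $U^+$ the group of totally positive units, $\epsilon$ a generator of $U^+$, and $C$ a set of representatives of $\mathcal{O}_K^+/U^+$. For integers $m,n$ set \[\zeta_{K;C,\epsilon^kC}(m,n)=\sum_{\alpha\in C}\sum_{\beta\in\epsilon^kC}\frac{1}{N(\alpha)^mN(\alpha+\beta)^n},\qquad Z(m,n)=\sum_{k\in\mathbb{Z}}\zeta_{K;C,\epsilon^kC}(m,n),\] where $N$ is the norm from $K$ to $\mathbb{Q}$ and $\epsilon^kC=\{\epsilon^k\alpha:\alpha\in C\}$. Then $Z(m,n)$ is finite for $m>n>1$. *)

theory Defs
  imports "HOL-Analysis.Analysis" "HOL-Computational_Algebra.Computational_Algebra"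
begin

definition quad_field :: "int \<Rightarrow> real set" where
  "quad_field d = {of_rat a + of_rat b * sqrt (of_int d) | a b. True}"

text \<open>The nontrivial Galois conjugate a + b sqrt d \<mapsto> a - b sqrt d (well defined since sqrt d is irrational).\<close>
definition qconj :: "int \<Rightarrow> real \<Rightarrow> real" where
  "qconj d x = (THE y. \<exists>a b. x = of_rat a + of_rat b * sqrt (of_int d) \<and>
                             y = of_rat a - of_rat b * sqrt (of_int d))"

definition qnorm :: "int \<Rightarrow> real \<Rightarrow> real" where
  "qnorm d x = x * qconj d x"

definition qints :: "int \<Rightarrow> real set" where
  "qints d = {x \<in> quad_field d. algebraic_int x}"

definition qints_pos :: "int \<Rightarrow> real set" where
  "qints_pos d = {x \<in> qints d. x > 0 \<and> qconj d x > 0}"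

definition qunits_pos :: "int \<Rightarrow> real set" where
  "qunits_pos d = {u \<in> qints_pos d. inverse u \<in> qints d}"

end

theory Submission
  imports Defs
begin

lemma map_poly_of_int_mult:
  "map_poly (of_int :: int \<Rightarrow> real) (p * q) = map_poly of_int p * map_poly of_int q"
  by (rule poly_eqI) (simp add: coeff_map_poly coeff_mult)

lemma map_poly_of_int_add:
  "map_poly (of_int :: int \<Rightarrow> real) (p + q) = map_poly of_int p + map_poly of_int q"
  by (rule poly_eqI) (simp add: coeff_map_poly)

lemma map_poly_of_int_smult:
  "map_poly (of_int :: int \<Rightarrow> real) (smult c q) = smult (of_int c) (map_poly of_int q)"
  by (rule poly_eqI) (simp add: coeff_map_poly)

locale qf =
  fixes d :: int
  assumes d_gt1: "d > 1" and sqf: "squarefree d"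
begin

abbreviation "s \<equiv> sqrt (real_of_int d)"

lemma s_sq: "s * s = of_int d"
  using d_gt1 by simp

lemma s_pos: "s > 0"
  using d_gt1 by simp

lemma s_irr: "s \<notin> \<rat>"
proof
  assume "s \<in> \<rat>"
  have "algebraic_int (real_of_int d)" by (rule int_imp_algebraic_int) simp
  hence "algebraic_int s" by (rule algebraic_int_sqrt)
  hence "s \<in> \<int>" using \<open>s \<in> \<rat>\<close> by (rule rational_algebraic_int_is_int)
  then obtain k where k: "s = of_int k" by (auto elim: Ints_cases)
  have "of_int (k * k) = (of_int d :: real)" using s_sq k by simp
  hence kk: "k * k = d" by (simp only: of_int_eq_iff)
  hence "k ^ 2 dvd d" by (simp add: power2_eq_square)
  with sqf have "k dvd 1" by (auto simp: squarefree_def)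
  hence "\<bar>k\<bar> = 1" by simp
  hence "k * k = 1" by (metis abs_mult_self_eq mult.right_neutral)
  with kk d_gt1 show False by simp
qed

lemma rep_unique:
  assumes "of_rat a + of_rat b * s = of_rat a' + of_rat b' * s"
  shows "a = a' \<and> b = b'"
proof (cases "b = b'")
  case True
  with assms show ?thesis by simp
next
  case False
  hence "s = of_rat ((a - a') / (b' - b))"
    using assms by (simp add: of_rat_divide of_rat_diff field_simps)
  hence "s \<in> \<rat>" by simp
  with s_irr show ?thesis by simp
qed

lemma qconj_rep: "qconj d (of_rat a + of_rat b * s) = of_rat a - of_rat b * s"
  unfolding qconj_def
proof (rule the_equality)
  show "\<exists>a' b'. of_rat a + of_rat b * s = of_rat a' + of_rat b' * s \<and>
                of_rat a - of_rat b * s = of_rat a' - of_rat b' * s" by blast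
next
  fix y assume "\<exists>a' b'. of_rat a + of_rat b * s = of_rat a' + of_rat b' * s \<and>
                y = of_rat a' - of_rat b' * s"
  then obtain a' b' where "of_rat a + of_rat b * s = of_rat a' + of_rat b' * s"
      "y = of_rat a' - of_rat b' * s" by blast
  with rep_unique show "y = of_rat a - of_rat b * s" by metis
qed

lemma inK_iff: "x \<in> quad_field d \<longleftrightarrow> (\<exists>a b. x = of_rat a + of_rat b * s)"
  by (auto simp: quad_field_def)

lemma inK_rep: "of_rat a + of_rat b * s \<in> quad_field d"
  by (auto simp: quad_field_def)

lemma mult_rep: "(of_rat a + of_rat b * s) * (of_rat a' + of_rat b' * s) =
   of_rat (a * a' + of_int d * b * b') + of_rat (a * b' + a' * b) * s"
proof -
  have "(of_rat a + of_rat b * s) * (of_rat a' + of_rat b' * s) =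
     of_rat a * of_rat a' + of_rat b * of_rat b' * (s * s) + (of_rat a * of_rat b' + of_rat a' * of_rat b) * s"
    by (simp add: algebra_simps)
  also have "\<dots> = of_rat (a * a' + of_int d * b * b') + of_rat (a * b' + a' * b) * s"
    by (simp only: s_sq) (simp add: of_rat_add of_rat_mult)
  finally show ?thesis .
qed

lemma qconj_mult:
  assumes "x \<in> quad_field d" "y \<in> quad_field d"
  shows "x * y \<in> quad_field d \<and> qconj d (x * y) = qconj d x * qconj d y"
proof -
  from assms obtain a b a' b' where x: "x = of_rat a + of_rat b * s" and y: "y = of_rat a' + of_rat b' * s"
    by (auto simp: inK_iff)
  have "qconj d x * qconj d y = (of_rat a + of_rat (-b) * s) * (of_rat a' + of_rat (-b') * s)"
    by (simp add: x y qconj_rep of_rat_minus)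
  also have "\<dots> = of_rat (a * a' + of_int d * b * b') - of_rat (a * b' + a' * b) * s"
    by (simp only: mult_rep) (simp add: of_rat_minus of_rat_add of_rat_diff of_rat_mult algebra_simps)
  finally show ?thesis
    by (simp add: x y mult_rep qconj_rep inK_rep)
qed

lemma qconj_add:
  assumes "x \<in> quad_field d" "y \<in> quad_field d"
  shows "x + y \<in> quad_field d \<and> qconj d (x + y) = qconj d x + qconj d y"
proof -
  from assms obtain a b a' b' where x: "x = of_rat a + of_rat b * s" and y: "y = of_rat a' + of_rat b' * s"
    by (auto simp: inK_iff)
  have e: "x + y = of_rat (a + a') + of_rat (b + b') * s" by (simp add: x y of_rat_add algebra_simps)
  have 1: "x + y \<in> quad_field d" by (simp only: e inK_rep)
  have "qconj d (x + y) = of_rat (a + a') - of_rat (b + b') * s" by (simp only: e qconj_rep)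
  also have "\<dots> = qconj d x + qconj d y" by (simp add: x y qconj_rep of_rat_add algebra_simps)
  finally show ?thesis using 1 by simp
qed

lemma inK_of_rat: "of_rat r \<in> quad_field d" and qconj_of_rat: "qconj d (of_rat r) = of_rat r"
proof -
  have e: "of_rat r = of_rat r + of_rat 0 * s" by simp
  show "of_rat r \<in> quad_field d" by (subst e, rule inK_rep)
  show "qconj d (of_rat r) = of_rat r" by (subst e, subst qconj_rep) simp
qed

lemma inK_of_int: "of_int k \<in> quad_field d" and qconj_of_int: "qconj d (of_int k) = of_int k"
  using inK_of_rat[of "of_int k"] qconj_of_rat[of "of_int k"] by simp_all

lemma tr_nm_rat:
  assumes "x \<in> quad_field d"
  shows "x + qconj d x \<in> \<rat>" "x * qconj d x \<in> \<rat>"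
proof -
  from assms obtain a b where x: "x = of_rat a + of_rat b * s" by (auto simp: inK_iff)
  have "x + qconj d x = of_rat (2 * a)" by (simp add: x qconj_rep of_rat_mult)
  thus "x + qconj d x \<in> \<rat>" by simp
  have "x * qconj d x = of_rat a * of_rat a - of_rat b * of_rat b * (s * s)"
    by (simp add: x qconj_rep algebra_simps)
  also have "\<dots> = of_rat (a * a - of_int d * b * b)" by (simp only: s_sq) (simp add: of_rat_diff of_rat_mult)
  finally show "x * qconj d x \<in> \<rat>" by simp
qed

end

context qf begin

lemma int_core:
  fixes a b :: rat
  assumes b0: "b \<noteq> 0" and ai: "algebraic_int (of_rat a + of_rat b * s)"
  shows "2 * a \<in> \<int> \<and> a * a - of_int d * b * b \<in> \<int>"
proof -
  define x where "x = of_rat a + of_rat b * s"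
  have xirr: "x \<notin> \<rat>"
  proof
    assume "x \<in> \<rat>"
    hence "(x - of_rat a) / of_rat b \<in> \<rat>" by simp
    moreover have "(x - of_rat a) / of_rat b = s" using b0 by (simp add: x_def)
    ultimately show False using s_irr by simp
  qed
  obtain p :: "int poly" where p: "poly (map_poly of_int p) x = 0" "lead_coeff p = 1"
    using ai algebraic_int_altdef_ipoly x_def by blast
  define T where "T = 2 * a"
  define N where "N = a * a - of_int d * b * b"
  obtain t1 D1 where tq: "quotient_of T = (t1, D1)" by (cases "quotient_of T")
  obtain n2 D2 where nq: "quotient_of N = (n2, D2)" by (cases "quotient_of N")
  have D1: "D1 > 0" using tq quotient_of_denom_pos by blast
  have D2: "D2 > 0" using nq quotient_of_denom_pos by blast
  have Teq: "T = of_int t1 / of_int D1" using tq quotient_of_div by blast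
  have Neq: "N = of_int n2 / of_int D2" using nq quotient_of_div by blast
  define D where "D = D1 * D2"
  define t where "t = t1 * D2"
  define n where "n = n2 * D1"
  have Dpos: "D > 0" using D1 D2 by (simp add: D_def)
  have TD: "of_int D * T = of_int t" using D1 D2 by (simp add: Teq D_def t_def field_simps)
  have ND: "of_int D * N = of_int n" using D1 D2 by (simp add: Neq D_def n_def field_simps)
  have TDr: "of_int D * of_rat T = (of_int t :: real)"
    using arg_cong[OF TD, of of_rat] by (simp add: of_rat_mult)
  have NDr: "of_int D * of_rat N = (of_int n :: real)"
    using arg_cong[OF ND, of of_rat] by (simp add: of_rat_mult)
  define M :: "int poly" where "M = [:n, -t, D:]"
  have xx: "x * x = of_rat T * x - of_rat N"
  proof -
    have "x * x = of_rat a * of_rat a + 2 * of_rat a * of_rat b * s + of_rat b * of_rat b * (s * s)"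
      by (simp add: x_def algebra_simps)
    also have "\<dots> = of_rat a * of_rat a + 2 * of_rat a * of_rat b * s + of_rat b * of_rat b * of_int d"
      by (simp only: s_sq)
    also have "\<dots> = of_rat T * x - of_rat N"
      by (simp add: T_def N_def x_def of_rat_mult of_rat_diff algebra_simps)
    finally show ?thesis .
  qed
  have Mx: "poly (map_poly of_int M) x = 0"
  proof -
    have "poly (map_poly of_int M) x = of_int n - of_int t * x + of_int D * (x * x)"
      by (simp add: M_def map_poly_pCons algebra_simps)
    also have "\<dots> = of_int D * (of_rat N - of_rat T * x + x * x)"
      by (simp add: TDr[symmetric] NDr[symmetric] algebra_simps)
    also have "\<dots> = 0" by (simp add: xx)
    finally show ?thesis .
  qed
  have degM: "degree M = 2" and cM2: "coeff M 2 = D" and M0: "M \<noteq> 0"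
    using Dpos by (auto simp: M_def numeral_2_eq_2)
  obtain q r where pd: "pseudo_divmod p M = (q, r)" by (cases "pseudo_divmod p M")
  define K where "K = Suc (degree p) - degree M"
  have eq: "smult (D ^ K) p = M * q + r"
    using pseudo_divmod(1)[OF M0 pd] degM cM2 by (simp add: K_def)
  have rdeg: "r = 0 \<or> degree r < 2"
    using pseudo_divmod(2)[OF M0 pd] degM by simp
  have rx: "poly (map_poly of_int r) x = 0"
  proof -
    have "poly (map_poly of_int (smult (D^K) p)) x = poly (map_poly of_int (M*q+r)) x"
      by (simp only: eq)
    thus ?thesis by (simp add: map_poly_of_int_smult map_poly_of_int_add map_poly_of_int_mult p Mx)
  qed
  have r0: "r = 0"
  proof -
    have deg: "degree r \<le> 1" using rdeg by auto
    have rr: "r = [:coeff r 0, coeff r 1:]"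
    proof (rule poly_eqI)
      fix i show "coeff r i = coeff [:coeff r 0, coeff r 1:] i"
      proof (cases "i \<le> 1")
        case True thus ?thesis by (cases i) (auto simp: coeff_pCons split: nat.splits)
      next
        case False thus ?thesis using deg
          by (auto simp: coeff_pCons coeff_eq_0 split: nat.splits)
      qed
    qed
    have ev: "of_int (coeff r 0) + of_int (coeff r 1) * x = 0"
      using rx by (subst (asm) rr) (simp add: map_poly_pCons algebra_simps)
    have c1: "coeff r 1 = 0"
    proof (rule ccontr)
      assume "coeff r 1 \<noteq> 0"
      hence "x = - of_int (coeff r 0) / of_int (coeff r 1)" using ev by (simp add: field_simps)
      hence "x \<in> \<rat>" by simp
      with xirr show False by simp
    qed
    hence "coeff r 0 = 0" using ev by simp
    with c1 show ?thesis by (subst rr) simp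
  qed
  define Q where "Q = smult D q"
  have eq2: "smult (D ^ Suc K) p = M * Q"
  proof -
    have "smult (D ^ Suc K) p = smult D (smult (D ^ K) p)" by simp
    also have "\<dots> = M * Q" by (simp add: eq r0 Q_def mult_smult_right)
    finally show ?thesis .
  qed
  have p0: "p \<noteq> 0" using p(2) by auto
  have Q0: "Q \<noteq> 0" using eq2 p0 Dpos by auto
  have lcM: "lead_coeff M = D" using degM cM2 by simp
  have "lead_coeff (M * Q) = D ^ Suc K" by (simp only: eq2[symmetric] lead_coeff_smult p(2))
  hence "D * lead_coeff Q = D * D ^ K" by (simp add: lead_coeff_mult lcM)
  hence lcQ: "lead_coeff Q = D ^ K" using Dpos by simp
  have cp: "content p = 1"
  proof -
    have "content p dvd 1" using content_dvd_coeff[of p "degree p"] p(2) by simp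
    hence "normalize (content p) = 1" by (simp add: is_unit_normalize)
    thus ?thesis by (metis normalize_content)
  qed
  have cc: "content M * content Q = D * D ^ K"
  proof -
    have "content (M * Q) = content (smult (D ^ Suc K) p)" by (simp only: eq2)
    also have "\<dots> = D * D ^ K" using Dpos by (simp add: cp)
    finally show ?thesis by (simp add: content_mult)
  qed
  have "content Q dvd D ^ K" using content_dvd_coeff[of Q "degree Q"] lcQ by simp
  then obtain e where e: "D ^ K = content Q * e" by (elim dvdE)
  have cQ0: "content Q \<noteq> 0" using Q0 by simp
  have "content Q * content M = content Q * (D * e)" using cc e by (simp add: algebra_simps)
  hence "content M = D * e" using cQ0 by simp
  hence Ddvd: "D dvd content M" by simp
  have "D dvd t" using dvd_trans[OF Ddvd content_dvd_coeff[of M 1]] by (simp add: M_def)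
  then obtain t' where t': "t = D * t'" by (elim dvdE)
  have "D dvd n" using dvd_trans[OF Ddvd content_dvd_coeff[of M 0]] by (simp add: M_def)
  then obtain n' where n': "n = D * n'" by (elim dvdE)
  have "T = of_int t'" using TD t' Dpos by (simp add: field_simps)
  moreover have "N = of_int n'" using ND n' Dpos by (simp add: field_simps)
  ultimately show ?thesis by (simp add: T_def N_def)
qed

lemma alg_int_tr_nm:
  assumes "x \<in> quad_field d" "algebraic_int x"
  shows "x + qconj d x \<in> \<int> \<and> x * qconj d x \<in> \<int>"
proof -
  from assms obtain a b where x: "x = of_rat a + of_rat b * s" by (auto simp: inK_iff)
  show ?thesis
  proof (cases "b = 0")
    case True
    hence xr: "x = of_rat a" by (simp add: x)
    hence "x \<in> \<rat>" by simp
    hence "x \<in> \<int>" using assms(2) by (intro rational_algebraic_int_is_int)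
    moreover have "qconj d x = x" by (simp add: xr qconj_of_rat)
    ultimately show ?thesis by simp
  next
    case False
    from int_core[OF False] assms(2) x
    have h: "2 * a \<in> \<int>" "a * a - of_int d * b * b \<in> \<int>" by auto
    from h(1) obtain k where k: "2 * a = of_int k" by (elim Ints_cases)
    from h(2) obtain l where l: "a * a - of_int d * b * b = of_int l" by (elim Ints_cases)
    have "x + qconj d x = of_rat (2 * a)" by (simp add: x qconj_rep of_rat_mult)
    also have "\<dots> = of_int k" by (simp add: k)
    finally have 1: "x + qconj d x \<in> \<int>" by simp
    have "x * qconj d x = of_rat a * of_rat a - of_rat b * of_rat b * (s * s)"
      by (simp add: x qconj_rep algebra_simps)
    also have "\<dots> = of_rat (a * a - of_int d * b * b)"
      by (simp only: s_sq) (simp add: of_rat_diff of_rat_mult)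
    also have "\<dots> = of_int l" by (simp add: l)
    finally have 2: "x * qconj d x \<in> \<int>" by simp
    from 1 2 show ?thesis by simp
  qed
qed

end

context qf begin

definition good :: "real \<Rightarrow> bool" where
  "good x \<longleftrightarrow> x \<in> quad_field d \<and> x + qconj d x \<in> \<int> \<and> x * qconj d x \<in> \<int>"

lemma good_alg: "x \<in> quad_field d \<Longrightarrow> algebraic_int x \<Longrightarrow> good x"
  using alg_int_tr_nm by (simp add: good_def)

lemma good_mult:
  assumes gx: "good x" and gy: "good y"
  shows "good (x * y)"
proof -
  have K: "x \<in> quad_field d" "y \<in> quad_field d" using gx gy by (auto simp: good_def)
  define x' where "x' = qconj d x"
  define y' where "y' = qconj d y"
  from qconj_mult[OF K] have Kxy: "x * y \<in> quad_field d" and cxy: "qconj d (x*y) = x' * y'"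
    by (auto simp: x'_def y'_def)
  obtain tx where tx: "x + x' = of_int tx" using gx by (auto simp: good_def x'_def elim!: Ints_cases)
  obtain nx where nx: "x * x' = of_int nx" using gx by (auto simp: good_def x'_def elim!: Ints_cases)
  obtain ty where ty: "y + y' = of_int ty" using gy by (auto simp: good_def y'_def elim!: Ints_cases)
  obtain ny where ny: "y * y' = of_int ny" using gy by (auto simp: good_def y'_def elim!: Ints_cases)
  define S where "S = x * y + x' * y'"
  define P where "P = ny * (tx * tx - 2 * nx) + nx * (ty * ty - 2 * ny)"
  have "S * S - of_int (tx * ty) * S + of_int P = 0"
  proof -
    have "S * (of_int (tx * ty) - S) = of_int P"
    proof -
      have "S * (of_int (tx * ty) - S) = (x*y + x'*y') * (x*y' + x'*y)"
        by (simp add: S_def tx[symmetric] ty[symmetric] algebra_simps)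
      also have "\<dots> = (y*y') * ((x+x')*(x+x') - 2*(x*x')) + (x*x') * ((y+y')*(y+y') - 2*(y*y'))"
        by (simp add: algebra_simps)
      also have "\<dots> = of_int P" by (simp add: tx ty nx ny P_def)
      finally show ?thesis .
    qed
    thus ?thesis by (simp add: algebra_simps)
  qed
  hence "algebraic_int S"
    by (intro algebraic_int.intros[of "[:of_int P, - of_int (tx * ty), 1:]"])
       (auto simp: coeff_pCons algebra_simps split: nat.splits)
  moreover have "S \<in> \<rat>" using tr_nm_rat(1)[OF Kxy] by (simp add: cxy S_def)
  ultimately have "S \<in> \<int>" by (rule rational_algebraic_int_is_int)
  moreover have "x * y * qconj d (x * y) = of_int (nx * ny)"
    by (simp add: cxy nx[symmetric] ny[symmetric] algebra_simps)
  ultimately show ?thesis using Kxy by (simp add: good_def cxy S_def)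
qed

lemma qunit_norm:
  assumes "w \<in> qunits_pos d"
  shows "w * qconj d w = 1"
proof -
  have w: "w \<in> quad_field d" "algebraic_int w" "w > 0" "qconj d w > 0"
    and iw: "inverse w \<in> quad_field d" "algebraic_int (inverse w)"
    using assms by (auto simp: qunits_pos_def qints_pos_def qints_def)
  obtain i where i: "w * qconj d w = of_int i"
    using alg_int_tr_nm[OF w(1,2)] by (auto elim!: Ints_cases)
  obtain j where j: "inverse w * qconj d (inverse w) = of_int j"
    using alg_int_tr_nm[OF iw] by (auto elim!: Ints_cases)
  have "qconj d w * qconj d (inverse w) = qconj d (w * inverse w)"
    using qconj_mult[OF w(1) iw(1)] by simp
  also have "\<dots> = 1" using w(3) qconj_of_int[of 1] by simp
  finally have c1: "qconj d w * qconj d (inverse w) = 1" .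
  have "of_int (i * j) = (w * inverse w) * (qconj d w * qconj d (inverse w))"
    by (simp add: i[symmetric] j[symmetric] algebra_simps)
  also have "\<dots> = 1" using w(3) c1 by simp
  finally have "i * j = 1" by (simp only: of_int_eq_1_iff)
  hence "i = 1 \<or> i = -1" using zmult_eq_1_iff by blast
  moreover have "i > 0" using i w(3,4) by (metis mult_pos_pos of_int_0_less_iff)
  ultimately show ?thesis using i by auto
qed

end

context qf begin

lemma pell_int: "\<exists>x y::int. x * x - d * y * y = 1 \<and> y \<noteq> 0"
proof -
  define A where "A = approx_set s"
  have infA: "infinite A" using rational_iff_finite_approx_set[of s] s_irr by (simp add: A_def)
  define B where "B = \<lceil>2 * s + 1\<rceil>"
  define \<nu> where "\<nu> = (\<lambda>(h::int, k::int). h * h - d * k * k)"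
  have bound: "\<nu> a \<in> {-B..B}" if "a \<in> A" for a
  proof -
    obtain h k where a: "a = (h, k)" by (cases a)
    from that have k0: "k > 0" and ap: "\<bar>s - of_int h / of_int k\<bar> < 1 / (of_int k)\<^sup>2"
      by (auto simp: A_def approx_set_def a)
    have kr: "real_of_int k \<ge> 1" using k0 by simp
    have e1: "\<bar>of_int k * s - of_int h\<bar> < 1 / of_int k"
    proof -
      have "\<bar>of_int k * s - of_int h\<bar> = of_int k * \<bar>s - of_int h / of_int k\<bar>"
        using k0 by (simp add: field_simps abs_mult[symmetric])
      also have "\<dots> < of_int k * (1 / (of_int k)\<^sup>2)" using mult_strict_left_mono[OF ap, of "of_int k"] k0 by simp
      also have "\<dots> = 1 / of_int k" using k0 by (simp add: power2_eq_square)
      finally show ?thesis .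
    qed
    have e2: "real_of_int (\<nu> a) = (of_int h - of_int k * s) * (of_int h + of_int k * s)"
    proof -
      have "(of_int h - of_int k * s) * (of_int h + of_int k * s) = of_int h * of_int h - of_int k * of_int k * (s * s)"
        by (simp add: algebra_simps)
      also have "\<dots> = real_of_int (\<nu> a)" unfolding s_sq by (simp add: \<nu>_def a)
      finally show ?thesis by simp
    qed
    have e3: "\<bar>of_int h + of_int k * s\<bar> \<le> 1 / of_int k + 2 * of_int k * s"
    proof -
      have ks: "0 \<le> of_int k * s" using k0 s_pos by simp
      have "\<bar>of_int h + of_int k * s\<bar> \<le> \<bar>of_int h - of_int k * s\<bar> + \<bar>2 * of_int k * s\<bar>"
        using abs_triangle_ineq[of "of_int h - of_int k * s" "2 * of_int k * s"] by simp
      moreover have "\<bar>of_int h - of_int k * s\<bar> = \<bar>of_int k * s - of_int h\<bar>" by (rule abs_minus_commute)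
      moreover have "\<bar>2 * of_int k * s\<bar> = 2 * of_int k * s" using ks by simp
      ultimately show ?thesis using e1 by linarith
    qed
    have "\<bar>real_of_int (\<nu> a)\<bar> \<le> (1 / of_int k) * (1 / of_int k + 2 * of_int k * s)"
      unfolding e2 abs_mult using e1 e3 k0
      by (intro mult_mono) (auto simp: abs_minus_commute)
    also have "\<dots> = 1 / (of_int k * of_int k) + 2 * s" using k0 by (simp add: field_simps)
    also have "\<dots> \<le> 1 + 2 * s"
    proof -
      have "1 / (real_of_int k * of_int k) \<le> 1" using kr
        using mult_mono[OF kr kr] by simp
      thus ?thesis by simp
    qed
    finally have "\<bar>real_of_int (\<nu> a)\<bar> \<le> 2 * s + 1" by simp
    hence "\<bar>\<nu> a\<bar> \<le> B" unfolding B_def by linarith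
    thus ?thesis by auto
  qed
  have "\<nu> ` A \<subseteq> {-B..B}" using bound by blast
  hence "finite (\<nu> ` A)" by (rule finite_subset) simp
  from pigeonhole_infinite[OF infA this] obtain a0 where a0: "a0 \<in> A"
    and infA0: "infinite {a \<in> A. \<nu> a = \<nu> a0}" by blast
  define N where "N = \<nu> a0"
  define A0 where "A0 = {a \<in> A. \<nu> a = N}"
  have infA0': "infinite A0" using infA0 by (simp add: A0_def N_def)
  have N0: "N \<noteq> 0"
  proof
    assume "N = 0"
    obtain h k where a: "a0 = (h, k)" by (cases a0)
    from a0 have k0: "k > 0" by (auto simp: A_def approx_set_def a)
    have "h * h = d * k * k" using \<open>N = 0\<close> by (simp add: N_def \<nu>_def a)
    hence "real_of_int h * of_int h = of_int d * of_int k * of_int k"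
      by (metis of_int_mult)
    hence "(of_int h / of_int k) ^ 2 = (of_int d :: real)"
      using k0 by (simp add: field_simps power2_eq_square)
    hence "sqrt (of_int d) = \<bar>of_int h / of_int k\<bar>"
      by (metis real_sqrt_abs)
    hence "s \<in> \<rat>" by simp
    with s_irr show False by simp
  qed
  define \<mu> where "\<mu> = (\<lambda>(h::int, k::int). (h mod N, k mod N))"
  have "\<mu> ` A0 \<subseteq> {-\<bar>N\<bar>..\<bar>N\<bar>} \<times> {-\<bar>N\<bar>..\<bar>N\<bar>}"
  proof
    fix z assume "z \<in> \<mu> ` A0"
    then obtain h k where z: "z = (h mod N, k mod N)" by (auto simp: \<mu>_def)
    have "\<bar>h mod N\<bar> < \<bar>N\<bar>" "\<bar>k mod N\<bar> < \<bar>N\<bar>" using N0 by (simp_all add: abs_mod_less)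
    thus "z \<in> {-\<bar>N\<bar>..\<bar>N\<bar>} \<times> {-\<bar>N\<bar>..\<bar>N\<bar>}" by (auto simp: z)
  qed
  hence "finite (\<mu> ` A0)" by (rule finite_subset) simp
  from pigeonhole_infinite[OF infA0' this] obtain a1 where a1: "a1 \<in> A0"
    and infA1: "infinite {a \<in> A0. \<mu> a = \<mu> a1}" by blast
  have "{a \<in> A0. \<mu> a = \<mu> a1} \<noteq> {a1}" using infA1 by auto
  moreover have "a1 \<in> {a \<in> A0. \<mu> a = \<mu> a1}" using a1 by simp
  ultimately obtain a2 where a2: "a2 \<in> A0" "\<mu> a2 = \<mu> a1" "a2 \<noteq> a1" by blast
  obtain h1 k1 where a1e: "a1 = (h1, k1)" by (cases a1)
  obtain h2 k2 where a2e: "a2 = (h2, k2)" by (cases a2)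
  have k1: "k1 > 0" and k2: "k2 > 0" using a1 a2 by (auto simp: A0_def A_def approx_set_def a1e a2e)
  have N1: "h1 * h1 - d * k1 * k1 = N" and N2: "h2 * h2 - d * k2 * k2 = N"
    using a1 a2 by (auto simp: A0_def \<nu>_def a1e a2e)
  have "h2 mod N = h1 mod N" "k2 mod N = k1 mod N" using a2(2) by (auto simp: \<mu>_def a1e a2e)
  then have "N dvd h2 - h1" "N dvd k2 - k1" by (simp_all add: mod_eq_dvd_iff)
  then obtain u v where u: "h2 - h1 = N * u" and v: "k2 - k1 = N * v" by (auto elim!: dvdE)
  define x where "x = 1 + h1 * u - d * k1 * v"
  define y where "y = h1 * v - u * k1"
  have h2e: "h2 = h1 + N * u" and k2e: "k2 = k1 + N * v" using u v by simp_all
  have Nx: "N * x = h1 * h2 - d * k1 * k2"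
  proof -
    have "h1 * h2 - d * k1 * k2 = (h1 * h1 - d * k1 * k1) + N * (h1 * u - d * k1 * v)"
      unfolding h2e k2e by (simp add: algebra_simps)
    also have "\<dots> = N * x" unfolding N1 by (simp add: x_def algebra_simps)
    finally show ?thesis by simp
  qed
  have Ny: "N * y = h1 * k2 - h2 * k1"
    unfolding h2e k2e by (simp add: y_def algebra_simps)
  have "N * N * (x * x - d * y * y) = (N * x) * (N * x) - d * (N * y) * (N * y)"
    by (simp add: algebra_simps)
  also have "\<dots> = (h1 * h1 - d * k1 * k1) * (h2 * h2 - d * k2 * k2)"
    unfolding Nx Ny by (simp add: algebra_simps)
  also have "\<dots> = N * N" unfolding N1 N2 ..
  finally have "N * N * (x * x - d * y * y) = N * N * 1" by simp
  hence pe: "x * x - d * y * y = 1" using N0 by simp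
  have "y \<noteq> 0"
  proof
    assume "y = 0"
    hence hk: "h1 * k2 = h2 * k1" using Ny by simp
    have "N * (k2 * k2) = (k1 * k1) * N"
    proof -
      have "N * (k2 * k2) = (h1 * h1 - d * k1 * k1) * (k2 * k2)" unfolding N1 ..
      also have "\<dots> = (h1 * k2) * (h1 * k2) - d * k1 * k1 * k2 * k2" by (simp add: algebra_simps)
      also have "\<dots> = (h2 * k1) * (h2 * k1) - d * k1 * k1 * k2 * k2" by (simp add: hk)
      also have "\<dots> = (k1 * k1) * (h2 * h2 - d * k2 * k2)" by (simp add: algebra_simps)
      also have "\<dots> = (k1 * k1) * N" unfolding N2 ..
      finally show ?thesis .
    qed
    hence "k2 * k2 = k1 * k1" using N0 by (simp add: algebra_simps)
    hence "(k2 - k1) * (k2 + k1) = 0" by (simp add: algebra_simps)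
    hence "k2 = k1" using k1 k2 by simp
    hence "h1 = h2" using hk k1 by simp
    with \<open>k2 = k1\<close> a2(3) show False by (simp add: a1e a2e)
  qed
  with pe show ?thesis by blast
qed

end

lemma summable_bounded_fibers:
  fixes f :: "'a \<Rightarrow> real" and g :: "'b \<Rightarrow> real" and \<pi> :: "'a \<Rightarrow> 'b"
  assumes g: "g summable_on UNIV" "\<And>y. g y \<ge> 0"
    and fg: "\<And>x. x \<in> A \<Longrightarrow> 0 \<le> f x \<and> f x \<le> g (\<pi> x)"
    and fib: "\<And>y. finite {x\<in>A. \<pi> x = y} \<and> card {x\<in>A. \<pi> x = y} \<le> M"
  shows "f summable_on A"
proof (rule nonneg_bdd_above_summable_on)
  show "\<And>x. x \<in> A \<Longrightarrow> 0 \<le> f x" using fg by blast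
  show "bdd_above (sum f ` {F. F \<subseteq> A \<and> finite F})"
  proof (rule bdd_aboveI2)
    fix F assume "F \<in> {F. F \<subseteq> A \<and> finite F}"
    hence FA: "F \<subseteq> A" and fin: "finite F" by auto
    have "sum f F \<le> sum (\<lambda>x. g (\<pi> x)) F" using fg FA by (intro sum_mono) auto
    also have "\<dots> = (\<Sum>y\<in>\<pi> ` F. sum (\<lambda>x. g (\<pi> x)) {x. x \<in> F \<and> \<pi> x = y})"
      using fin by (rule sum.image_gen)
    also have "\<dots> = (\<Sum>y\<in>\<pi> ` F. of_nat (card {x. x \<in> F \<and> \<pi> x = y}) * g y)"
    proof (rule sum.cong)
      fix y assume "y \<in> \<pi> ` F"
      have "sum (\<lambda>x. g (\<pi> x)) {x. x \<in> F \<and> \<pi> x = y} = sum (\<lambda>x. g y) {x. x \<in> F \<and> \<pi> x = y}"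
        by (rule sum.cong) auto
      thus "sum (\<lambda>x. g (\<pi> x)) {x. x \<in> F \<and> \<pi> x = y} = of_nat (card {x. x \<in> F \<and> \<pi> x = y}) * g y"
        by simp
    qed simp
    also have "\<dots> \<le> (\<Sum>y\<in>\<pi> ` F. of_nat M * g y)"
    proof (rule sum_mono)
      fix y assume "y \<in> \<pi> ` F"
      have "card {x. x \<in> F \<and> \<pi> x = y} \<le> card {x\<in>A. \<pi> x = y}"
        using fib[of y] FA by (intro card_mono) auto
      also have "\<dots> \<le> M" using fib[of y] by blast
      finally show "of_nat (card {x. x \<in> F \<and> \<pi> x = y}) * g y \<le> of_nat M * g y"
        using g(2)[of y] by (intro mult_right_mono) auto
    qed
    also have "\<dots> = of_nat M * sum g (\<pi> ` F)" by (simp add: sum_distrib_left)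
    also have "\<dots> \<le> of_nat M * infsum g UNIV"
      using fin g by (intro mult_left_mono finite_sum_le_infsum) auto
    finally show "sum f F \<le> of_nat M * infsum g UNIV" .
  qed
qed

lemma summable_on_prod_nonneg:
  fixes a :: "'a \<Rightarrow> real" and b :: "'b \<Rightarrow> real"
  assumes a: "a summable_on UNIV" and b: "b summable_on UNIV" and a0: "\<And>x. a x \<ge> 0" and b0: "\<And>y. b y \<ge> 0"
  shows "(\<lambda>(x,y). a x * b y) summable_on UNIV"
proof (rule nonneg_bdd_above_summable_on)
  show "\<And>z. z \<in> UNIV \<Longrightarrow> 0 \<le> (\<lambda>(x,y). a x * b y) z" using a0 b0 by auto
  show "bdd_above (sum (\<lambda>(x,y). a x * b y) ` {F. F \<subseteq> UNIV \<and> finite F})"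
  proof (rule bdd_aboveI2)
    fix F :: "('a \<times> 'b) set" assume "F \<in> {F. F \<subseteq> UNIV \<and> finite F}"
    hence fin: "finite F" by auto
    have "sum (\<lambda>(x,y). a x * b y) F \<le> sum (\<lambda>(x,y). a x * b y) (fst ` F \<times> snd ` F)"
    proof (rule sum_mono2)
      show "finite (fst ` F \<times> snd ` F)" using fin by simp
      show "F \<subseteq> fst ` F \<times> snd ` F" by (auto simp: image_iff; force)
      show "\<And>z. z \<in> fst ` F \<times> snd ` F - F \<Longrightarrow> 0 \<le> (\<lambda>(x,y). a x * b y) z"
        using a0 b0 by auto
    qed
    also have "\<dots> = sum a (fst ` F) * sum b (snd ` F)"
      by (simp add: sum_product sum.cartesian_product)
    also have "\<dots> \<le> infsum a UNIV * infsum b UNIV"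
      using fin a b a0 b0
      by (intro mult_mono finite_sum_le_infsum sum_nonneg infsum_nonneg) auto
    finally show "sum (\<lambda>(x,y). a x * b y) F \<le> infsum a UNIV * infsum b UNIV" .
  qed
qed

lemma pseries_summable_on:
  assumes "p \<ge> 2"
  shows "(\<lambda>i::nat. 1 / (1 + real i) ^ p) summable_on UNIV"
proof -
  have "summable (\<lambda>n. inverse (real n ^ p))" using inverse_power_summable[OF assms] by simp
  hence "summable (\<lambda>n. inverse (real (Suc n) ^ p))" by (subst summable_Suc_iff)
  hence "summable (\<lambda>i::nat. 1 / (1 + real i) ^ p)" by (simp add: inverse_eq_divide add.commute)
  thus ?thesis by (rule summable_nonneg_imp_summable_on) simp
qed

context qf begin

lemma pell_unit: "\<exists>u \<in> qunits_pos d. u \<noteq> 1"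
proof -
  obtain x y :: int where xy: "x * x - d * y * y = 1" and y0: "y \<noteq> 0" using pell_int by blast
  define X where "X = \<bar>x\<bar>"
  have XY: "X * X - d * y * y = 1" using xy by (simp add: X_def abs_mult_self_eq)
  have X0: "X \<ge> 0" by (simp add: X_def)
  define u where "u = of_rat (of_int X) + of_rat (of_int y) * s"
  define u' where "u' = of_rat (of_int X) + of_rat (of_int (- y)) * s"
  have ue: "u = of_int X + of_int y * s" and u'e: "u' = of_int X - of_int y * s"
    by (simp_all add: u_def u'_def of_rat_minus)
  have XYr: "real_of_int X * of_int X - of_int y * of_int y * (s * s) = 1"
    unfolding s_sq using arg_cong[OF XY, of real_of_int] by (simp add: algebra_simps)
  have big: "\<bar>of_int y * s\<bar> < real_of_int X"
  proof -
    have "\<bar>of_int y * s\<bar> * \<bar>of_int y * s\<bar> = (of_int y * s) * (of_int y * s)" by (rule abs_mult_self_eq)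
    also have "\<dots> = of_int y * of_int y * (s * s)" by algebra
    also have "\<dots> < real_of_int X * of_int X" using XYr by linarith
    finally have "\<bar>of_int y * s\<bar> * \<bar>of_int y * s\<bar> < real_of_int X * of_int X" .
    show ?thesis
    proof (rule ccontr)
      assume "\<not> \<bar>of_int y * s\<bar> < real_of_int X"
      hence "real_of_int X \<le> \<bar>of_int y * s\<bar>" by simp
      hence "real_of_int X * of_int X \<le> \<bar>of_int y * s\<bar> * \<bar>of_int y * s\<bar>"
        using X0 by (intro mult_mono) auto
      with \<open>\<bar>of_int y * s\<bar> * \<bar>of_int y * s\<bar> < real_of_int X * of_int X\<close> show False by simp
    qed
  qed
  have upos: "u > 0" using big by (simp add: ue abs_less_iff)
  have u'pos: "u' > 0" using big by (simp add: u'e abs_less_iff)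
  have "u * u' = of_int X * of_int X - of_int y * of_int y * (s * s)" unfolding ue u'e by algebra
  hence uu': "u * u' = 1" using XYr by simp
  have inv: "inverse u = u'" using uu' by (simp add: inverse_unique)
  have cu: "qconj d u = u'" unfolding u_def u'_def qconj_rep by (simp add: of_rat_minus)
  have poly: "1 - 2 * of_int X * z + z * z = 0" if "z * z = 2 * of_int X * z - 1" for z :: real
    using that by simp
  have alg: "algebraic_int z" if "z * z = 2 * of_int X * z - 1" for z :: real
    by (rule algebraic_int.intros[of "[:1, - 2 * of_int X, 1:]"])
       (use that in \<open>auto simp: coeff_pCons algebra_simps split: nat.splits\<close>)
  have "u * u - (2 * of_int X * u - 1) = 1 - (of_int X * of_int X - of_int y * of_int y * (s * s))"
    unfolding ue by algebra
  hence "u * u = 2 * of_int X * u - 1" using XYr by simp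
  hence au: "algebraic_int u" by (rule alg)
  have "u' * u' - (2 * of_int X * u' - 1) = 1 - (of_int X * of_int X - of_int y * of_int y * (s * s))"
    unfolding u'e by algebra
  hence "u' * u' = 2 * of_int X * u' - 1" using XYr by simp
  hence au': "algebraic_int u'" by (rule alg)
  have Ku: "u \<in> quad_field d" and Ku': "u' \<in> quad_field d" unfolding u_def u'_def by (rule inK_rep)+
  have "u \<in> qunits_pos d"
    using Ku Ku' au au' upos u'pos by (simp add: qunits_pos_def qints_pos_def qints_def inv cu)
  moreover have "u \<noteq> 1"
  proof
    assume "u = 1"
    hence "of_rat (of_int X) + of_rat (of_int y) * s = of_rat 1 + of_rat 0 * s" by (simp add: u_def)
    from rep_unique[OF this] y0 show False by simp
  qed
  ultimately show ?thesis by blast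
qed

end

lemma card_ints_interval:
  assumes L: "L \<ge> 0"
  shows "finite {z::real. z \<in> \<int> \<and> lo \<le> z \<and> z \<le> lo + L} \<and>
         card {z::real. z \<in> \<int> \<and> lo \<le> z \<and> z \<le> lo + L} \<le> nat \<lfloor>L\<rfloor> + 1"
proof -
  define a where "a = \<lceil>lo\<rceil>"
  have sub: "{z::real. z \<in> \<int> \<and> lo \<le> z \<and> z \<le> lo + L} \<subseteq> of_int ` {a .. a + \<lfloor>L\<rfloor>}"
  proof
    fix z assume "z \<in> {z::real. z \<in> \<int> \<and> lo \<le> z \<and> z \<le> lo + L}"
    then obtain k where z: "z = of_int k" and k1: "lo \<le> of_int k" and k2: "of_int k \<le> lo + L"
      by (auto elim!: Ints_cases)
    have "a \<le> k" using k1 by (simp add: a_def ceiling_le_iff)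
    moreover have "real_of_int (k - a) \<le> L" by (simp add: a_def) (use k2 le_of_int_ceiling[of lo] in linarith)
    hence "k - a \<le> \<lfloor>L\<rfloor>" by (simp add: le_floor_iff)
    ultimately show "z \<in> of_int ` {a .. a + \<lfloor>L\<rfloor>}" by (auto simp: z)
  qed
  have "finite (of_int ` {a .. a + \<lfloor>L\<rfloor>} :: real set)" by simp
  moreover have "card (of_int ` {a .. a + \<lfloor>L\<rfloor>} :: real set) \<le> nat \<lfloor>L\<rfloor> + 1"
  proof -
    have "card (of_int ` {a .. a + \<lfloor>L\<rfloor>} :: real set) \<le> card {a .. a + \<lfloor>L\<rfloor>}" by (rule card_image_le) simp
    also have "\<dots> = nat (\<lfloor>L\<rfloor> + 1)" by simp
    also have "\<dots> = nat \<lfloor>L\<rfloor> + 1" using L by (simp add: nat_add_distrib)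
    finally show ?thesis .
  qed
  ultimately show ?thesis using sub by (meson card_mono finite_subset order_trans)
qed

locale qmain = qf +
  fixes \<epsilon> :: real and C :: "real set" and m n :: nat
  assumes gen: "qunits_pos d = {\<epsilon> powi k | k. True}"
    and \<epsilon>_unit: "\<epsilon> \<in> qunits_pos d"
    and C_sub: "C \<subseteq> qints_pos d"
    and C_rep: "\<forall>\<alpha>\<in>qints_pos d. \<exists>!c. c \<in> C \<and> (\<exists>u\<in>qunits_pos d. \<alpha> = u * c)"
    and n1: "n > 1" and mn: "m > n"
begin

definition Pg :: "real \<Rightarrow> bool" where
  "Pg x \<longleftrightarrow> good x \<and> x > 0 \<and> qconj d x > 0"

lemma eps_pos: "\<epsilon> > 0" using \<epsilon>_unit by (simp add: qunits_pos_def qints_pos_def)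

lemma pw_unit: "\<epsilon> powi k \<in> qunits_pos d" using gen by blast

lemma eps_ne1: "\<epsilon> \<noteq> 1"
proof
  assume e1: "\<epsilon> = 1"
  obtain u where "u \<in> qunits_pos d" "u \<noteq> 1" using pell_unit by blast
  then obtain k where "u = \<epsilon> powi k" using gen by blast
  with e1 \<open>u \<noteq> 1\<close> show False by simp
qed

lemma ln_eps_ne0: "ln \<epsilon> \<noteq> 0" using eps_pos eps_ne1 by simp

lemma pw_exp: "\<epsilon> powi k = exp (of_int k * ln \<epsilon>)"
proof -
  have "\<epsilon> powi k = \<epsilon> powr of_int k" using eps_pos by (simp add: powr_real_of_int')
  also have "\<dots> = exp (of_int k * ln \<epsilon>)" using eps_pos by (simp add: powr_def)
  finally show ?thesis .
qed

lemma pw_inj: "\<epsilon> powi k = \<epsilon> powi j \<Longrightarrow> k = j"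
  using ln_eps_ne0 by (simp add: pw_exp)

lemma pw_pos: "\<epsilon> powi k > 0" using eps_pos by simp

lemma unit_facts:
  assumes "w \<in> qunits_pos d"
  shows "w > 0" "good w" "qconj d w = inverse w" "w \<in> quad_field d"
proof -
  show "w > 0" "w \<in> quad_field d" using assms by (auto simp: qunits_pos_def qints_pos_def qints_def)
  show "good w" using assms by (intro good_alg) (auto simp: qunits_pos_def qints_pos_def qints_def)
  have "w * qconj d w = 1" using assms by (rule qunit_norm)
  thus "qconj d w = inverse w" by (simp add: inverse_unique)
qed

lemma Pg_qints: "x \<in> qints_pos d \<Longrightarrow> Pg x"
  by (auto simp: Pg_def qints_pos_def qints_def intro!: good_alg)

lemma Pg_K: "Pg x \<Longrightarrow> x \<in> quad_field d" by (simp add: Pg_def good_def)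

lemma unit_mult:
  assumes w: "w \<in> qunits_pos d" and x: "Pg x"
  shows "Pg (w * x)" "qconj d (w * x) = qconj d x / w"
proof -
  note wf = unit_facts[OF w]
  have Kx: "x \<in> quad_field d" using x by (simp add: Pg_def good_def)
  have cw: "qconj d (w * x) = qconj d w * qconj d x" using qconj_mult[OF wf(4) Kx] by simp
  thus c: "qconj d (w * x) = qconj d x / w" using wf(3) by (simp add: field_simps)
  show "Pg (w * x)" using x wf good_mult[OF wf(2)] c by (auto simp: Pg_def)
qed

lemma good_dl:
  assumes g: "good x"
  shows "of_int d * (x - qconj d x) / s \<in> \<int>"
proof -
  from g obtain a b where x: "x = of_rat a + of_rat b * s" by (auto simp: good_def inK_iff)
  have cx: "qconj d x = of_rat a - of_rat b * s" by (simp add: x qconj_rep)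
  obtain t where t: "x + qconj d x = of_int t" using g by (auto simp: good_def elim!: Ints_cases)
  obtain nn where nn: "x * qconj d x = of_int nn" using g by (auto simp: good_def elim!: Ints_cases)
  define z where "z = (2 * of_int d * of_rat b :: real)"
  have zq: "z \<in> \<rat>" by (simp add: z_def)
  have t2: "2 * of_rat a = (of_int t :: real)" using t unfolding cx by (simp add: x)
  have n2: "of_rat a * of_rat a - of_rat b * of_rat b * of_int d = (of_int nn :: real)"
  proof -
    have "x * qconj d x = of_rat a * of_rat a - of_rat b * of_rat b * (s * s)"
      unfolding cx unfolding x by algebra
    thus ?thesis using nn unfolding s_sq by simp
  qed
  have zz: "z * z = of_int (d * (t * t - 4 * nn))"
  proof -
    have "z * z = of_int d * (2 * of_rat a * (2 * of_rat a) - 4 * (of_rat a * of_rat a - of_rat b * of_rat b * of_int d))"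
      unfolding z_def by algebra
    also have "\<dots> = of_int (d * (t * t - 4 * nn))" unfolding t2 n2 by simp
    finally show ?thesis .
  qed
  have "algebraic_int z"
    by (rule algebraic_int.intros[of "[:- of_int (d * (t * t - 4 * nn)), 0, 1:]"])
       (use zz in \<open>auto simp: coeff_pCons split: nat.splits\<close>)
  hence zi: "z \<in> \<int>" using zq by (rule rational_algebraic_int_is_int)
  have "of_int d * (x - qconj d x) / s = z"
    using s_pos unfolding cx by (simp add: x z_def field_simps)
  with zi show ?thesis by simp
qed

lemma C_unique:
  assumes a: "a \<in> C" and b: "b \<in> C" and w: "w \<in> qunits_pos d" and e: "a = w * b"
  shows "a = b"
proof -
  have aq: "a \<in> qints_pos d" using a C_sub by auto
  from C_rep aq have ex1: "\<exists>!c. c \<in> C \<and> (\<exists>u\<in>qunits_pos d. a = u * c)" by blast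
  have one: "1 \<in> qunits_pos d" using pw_unit[of 0] by simp
  have "a \<in> C \<and> (\<exists>u\<in>qunits_pos d. a = u * a)" using a one by force
  moreover have "b \<in> C \<and> (\<exists>u\<in>qunits_pos d. a = u * b)" using b w e by blast
  ultimately show ?thesis using ex1 by blast
qed

definition J :: "real \<Rightarrow> int" where
  "J \<alpha> = - \<lfloor>ln (\<alpha> / qconj d \<alpha>) / (2 * ln \<epsilon>)\<rfloor>"

definition W :: "real \<Rightarrow> real" where "W \<alpha> = \<epsilon> powi J \<alpha>"

definition cc :: real where "cc = exp (- \<bar>ln \<epsilon>\<bar>)"

lemma cc_pos: "cc > 0" and cc_le1: "cc \<le> 1"
  by (simp_all add: cc_def)

lemma W_unit: "W \<alpha> \<in> qunits_pos d" by (simp add: W_def pw_unit)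

lemma norm_dom:
  assumes P: "Pg \<alpha>"
  shows "W \<alpha> * \<alpha> \<ge> cc" "qconj d \<alpha> / W \<alpha> \<ge> cc"
proof -
  define L where "L = ln \<epsilon>"
  have L0: "L \<noteq> 0" using ln_eps_ne0 by (simp add: L_def)
  have a0: "\<alpha> > 0" and ca0: "qconj d \<alpha> > 0" using P by (auto simp: Pg_def)
  define \<rho> where "\<rho> = \<alpha> / qconj d \<alpha>"
  have \<rho>0: "\<rho> > 0" using a0 ca0 by (simp add: \<rho>_def)
  define y where "y = ln \<rho> / (2 * L)"
  define \<theta> where "\<theta> = y - of_int \<lfloor>y\<rfloor>"
  have \<theta>: "0 \<le> \<theta>" "\<theta> < 1" by (simp_all add: \<theta>_def) linarith
  have Jeq: "J \<alpha> = - \<lfloor>y\<rfloor>" by (simp add: J_def y_def \<rho>_def L_def)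
  have w: "W \<alpha> = exp (of_int (J \<alpha>) * L)" by (simp add: W_def pw_exp L_def)
  have "ln (W \<alpha> * W \<alpha> * \<rho>) = 2 * of_int (J \<alpha>) * L + ln \<rho>"
    using \<rho>0 by (simp add: w ln_mult)
  also have "\<dots> = 2 * L * \<theta>" using L0 by (simp add: Jeq \<theta>_def y_def field_simps)
  finally have lnr: "ln (W \<alpha> * W \<alpha> * \<rho>) = 2 * L * \<theta>" .
  have "\<bar>2 * L * \<theta>\<bar> \<le> 2 * \<bar>L\<bar>"
    using \<theta> by (simp add: abs_mult) (metis mult_left_le mult_nonneg_nonneg abs_ge_zero less_imp_le)
  hence lb: "\<bar>ln (W \<alpha> * W \<alpha> * \<rho>)\<bar> \<le> 2 * \<bar>L\<bar>" using lnr by simp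
  have Wp: "W \<alpha> > 0" by (simp add: W_def pw_pos)
  have rpos: "W \<alpha> * W \<alpha> * \<rho> > 0" using Wp \<rho>0 by simp
  have r1: "W \<alpha> * W \<alpha> * \<rho> \<ge> exp (- 2 * \<bar>L\<bar>)"
  proof -
    have "exp (- 2 * \<bar>L\<bar>) \<le> exp (ln (W \<alpha> * W \<alpha> * \<rho>))" using lb by simp
    thus ?thesis using rpos by simp
  qed
  have r2: "W \<alpha> * W \<alpha> * \<rho> \<le> exp (2 * \<bar>L\<bar>)"
  proof -
    have "exp (ln (W \<alpha> * W \<alpha> * \<rho>)) \<le> exp (2 * \<bar>L\<bar>)" using lb by simp
    thus ?thesis using rpos by simp
  qed
  obtain N where N: "\<alpha> * qconj d \<alpha> = of_int N" using P by (auto simp: Pg_def good_def elim!: Ints_cases)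
  have "of_int N > (0::real)" using a0 ca0 N by (metis mult_pos_pos)
  hence "N \<ge> 1" by simp
  hence N1: "\<alpha> * qconj d \<alpha> \<ge> 1" using N by simp
  define u1 where "u1 = W \<alpha> * \<alpha>"
  define v1 where "v1 = qconj d \<alpha> / W \<alpha>"
  have u1p: "u1 > 0" and v1p: "v1 > 0" using Wp a0 ca0 by (simp_all add: u1_def v1_def)
  have uv: "u1 * v1 \<ge> 1" using N1 Wp by (simp add: u1_def v1_def)
  have ratio: "u1 / v1 = W \<alpha> * W \<alpha> * \<rho>" using Wp ca0 by (simp add: u1_def v1_def \<rho>_def field_simps)
  have ccsq: "cc * cc = exp (- 2 * \<bar>L\<bar>)" by (simp add: cc_def L_def flip: exp_add)
  have ccsq2: "cc * cc = 1 / exp (2 * \<bar>L\<bar>)" by (simp add: cc_def L_def exp_minus field_simps flip: exp_add)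
  have "u1 * u1 = (u1 / v1) * (u1 * v1)" using v1p by (simp add: field_simps)
  also have "\<dots> \<ge> exp (- 2 * \<bar>L\<bar>) * 1"
    using r1 uv ratio rpos by (intro mult_mono) auto
  finally have "u1 * u1 \<ge> cc * cc" by (simp add: ccsq)
  hence "u1 \<ge> cc" using u1p cc_pos by (metis mult_mono not_le less_imp_le mult_strict_mono)
  thus "W \<alpha> * \<alpha> \<ge> cc" by (simp add: u1_def)
  have "v1 * v1 = (u1 * v1) / (u1 / v1)" using v1p u1p by (simp add: field_simps)
  also have "\<dots> \<ge> 1 / exp (2 * \<bar>L\<bar>)"
    using r2 uv ratio rpos by (intro frac_le) auto
  finally have "v1 * v1 \<ge> cc * cc" by (simp add: ccsq2)
  hence "v1 \<ge> cc" using v1p cc_pos by (metis mult_mono not_le less_imp_le mult_strict_mono)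
  thus "qconj d \<alpha> / W \<alpha> \<ge> cc" by (simp add: v1_def)
qed

end

context qmain begin

definition \<kappa> :: real where "\<kappa> = cc / 2"

lemma kappa_pos: "\<kappa> > 0" using cc_pos by (simp add: \<kappa>_def)

lemma lbnd:
  assumes "cc \<le> a" "0 \<le> t" "t \<le> a"
  shows "\<kappa> * (1 + real (nat \<lfloor>t\<rfloor>)) \<le> a"
proof -
  have "real (nat \<lfloor>t\<rfloor>) \<le> t" using assms(2) by linarith
  hence "\<kappa> * (1 + real (nat \<lfloor>t\<rfloor>)) \<le> \<kappa> * (1 + a)"
    using kappa_pos assms(3) by (intro mult_left_mono) auto
  also have "\<dots> = cc / 2 + cc * a / 2" by (simp add: \<kappa>_def field_simps)
  also have "\<dots> \<le> a / 2 + a / 2"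
    using assms cc_le1 cc_pos by (intro add_mono) (auto simp: mult_left_le_one_le)
  finally show ?thesis by simp
qed

lemma floor_bounds:
  assumes "0 \<le> u" "nat \<lfloor>u\<rfloor> = i"
  shows "real i \<le> u" "u < real i + 1"
  using assms by linarith+

definition SS :: "(int \<times> real \<times> real) set" where
  "SS = {(k, \<alpha>, \<beta>). \<alpha> \<in> C \<and> \<beta> \<in> (\<lambda>x. \<epsilon> powi k * x) ` C}"

lemma SS_elem:
  assumes "x \<in> SS"
  obtains k \<alpha> \<beta> \<gamma> where "x = (k, \<alpha>, \<beta>)" "\<alpha> \<in> C" "\<gamma> \<in> C" "\<beta> = \<epsilon> powi k * \<gamma>"
  using assms by (auto simp: SS_def)

lemma C_Pg: "c \<in> C \<Longrightarrow> Pg c" using C_sub Pg_qints by auto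

lemma facts:
  assumes "\<alpha> \<in> C" "\<gamma> \<in> C" "\<beta> = \<epsilon> powi k * \<gamma>"
  shows "Pg (W \<alpha> * \<alpha>)" "qconj d (W \<alpha> * \<alpha>) = qconj d \<alpha> / W \<alpha>"
        "Pg (W \<alpha> * \<beta>)" "qconj d (W \<alpha> * \<beta>) = qconj d \<beta> / W \<alpha>"
        "W \<alpha> * \<alpha> \<ge> cc" "qconj d \<alpha> / W \<alpha> \<ge> cc"
        "\<beta> > 0" "qconj d \<beta> > 0" "W \<alpha> > 0"
        "qnorm d \<alpha> = (W \<alpha> * \<alpha>) * (qconj d \<alpha> / W \<alpha>)"
        "qnorm d (\<alpha> + \<beta>) = (W \<alpha> * \<alpha> + W \<alpha> * \<beta>) * (qconj d \<alpha> / W \<alpha> + qconj d \<beta> / W \<alpha>)"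
proof -
  have Pa: "Pg \<alpha>" using assms(1) by (rule C_Pg)
  have Pb: "Pg \<beta>" using unit_mult(1)[OF pw_unit C_Pg[OF assms(2)]] assms(3) by simp
  show "Pg (W \<alpha> * \<alpha>)" "qconj d (W \<alpha> * \<alpha>) = qconj d \<alpha> / W \<alpha>"
    using unit_mult[OF W_unit Pa] by auto
  show "Pg (W \<alpha> * \<beta>)" "qconj d (W \<alpha> * \<beta>) = qconj d \<beta> / W \<alpha>"
    using unit_mult[OF W_unit Pb] by auto
  show "W \<alpha> * \<alpha> \<ge> cc" "qconj d \<alpha> / W \<alpha> \<ge> cc" using norm_dom[OF Pa] by auto
  show "\<beta> > 0" "qconj d \<beta> > 0" using Pb by (auto simp: Pg_def)
  show Wp: "W \<alpha> > 0" by (simp add: W_def pw_pos)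
  show "qnorm d \<alpha> = (W \<alpha> * \<alpha>) * (qconj d \<alpha> / W \<alpha>)" using Wp by (simp add: qnorm_def)
  have "qconj d (\<alpha> + \<beta>) = qconj d \<alpha> + qconj d \<beta>" using qconj_add[OF Pg_K[OF Pa] Pg_K[OF Pb]] by simp
  thus "qnorm d (\<alpha> + \<beta>) = (W \<alpha> * \<alpha> + W \<alpha> * \<beta>) * (qconj d \<alpha> / W \<alpha> + qconj d \<beta> / W \<alpha>)"
    using Wp by (simp add: qnorm_def field_simps)
qed

lemma SS_inj:
  assumes x: "(k, \<alpha>, \<beta>) \<in> SS" and x': "(k', \<alpha>', \<beta>') \<in> SS"
    and e1: "W \<alpha> * \<alpha> = W \<alpha>' * \<alpha>'" and e2: "W \<alpha> * \<beta> = W \<alpha>' * \<beta>'"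
  shows "(k, \<alpha>, \<beta>) = (k', \<alpha>', \<beta>')"
proof -
  from x obtain \<gamma> where a: "\<alpha> \<in> C" and g: "\<gamma> \<in> C" and b: "\<beta> = \<epsilon> powi k * \<gamma>" by (auto simp: SS_def)
  from x' obtain \<gamma>' where a': "\<alpha>' \<in> C" and g': "\<gamma>' \<in> C" and b': "\<beta>' = \<epsilon> powi k' * \<gamma>'" by (auto simp: SS_def)
  have Wp: "W \<alpha> > 0" "W \<alpha>' > 0" by (simp_all add: W_def pw_pos)
  have "\<alpha> = (W \<alpha>' / W \<alpha>) * \<alpha>'" using e1 Wp by (simp add: field_simps)
  also have "W \<alpha>' / W \<alpha> = \<epsilon> powi (J \<alpha>' - J \<alpha>)" using eps_pos by (simp add: W_def power_int_diff)
  finally have "\<alpha> = \<epsilon> powi (J \<alpha>' - J \<alpha>) * \<alpha>'" .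
  hence aa: "\<alpha> = \<alpha>'" using C_unique[OF a a' pw_unit] by blast
  hence bb: "\<beta> = \<beta>'" using e2 Wp by simp
  have g0: "\<gamma>' > 0" using C_Pg[OF g'] by (simp add: Pg_def)
  have "\<gamma> = (\<epsilon> powi k' / \<epsilon> powi k) * \<gamma>'" using b b' bb eps_pos by (simp add: field_simps)
  also have "\<epsilon> powi k' / \<epsilon> powi k = \<epsilon> powi (k' - k)" using eps_pos by (simp add: power_int_diff)
  finally have "\<gamma> = \<epsilon> powi (k' - k) * \<gamma>'" .
  hence gg: "\<gamma> = \<gamma>'" using C_unique[OF g g' pw_unit] by blast
  hence "\<epsilon> powi k = \<epsilon> powi k'" using b b' bb g0 by simp
  hence "k = k'" by (rule pw_inj)
  with aa bb show ?thesis by simp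
qed

end

context qmain begin

definition \<phi> :: "nat \<Rightarrow> nat \<Rightarrow> real" where "\<phi> p i = 1 / (1 + real i) ^ p"

lemma main_summable:
  "(\<lambda>(k::int, \<alpha>, \<beta>). 1 / (qnorm d \<alpha> ^ m * qnorm d (\<alpha> + \<beta>) ^ n)) summable_on SS"
proof -
  define f where "f = (\<lambda>(k::int, \<alpha>::real, \<beta>::real). 1 / (qnorm d \<alpha> ^ m * qnorm d (\<alpha> + \<beta>) ^ n))"
  define U1 where "U1 = (\<lambda>x::int\<times>real\<times>real. W (fst (snd x)) * fst (snd x))"
  define V1 where "V1 = (\<lambda>x::int\<times>real\<times>real. qconj d (fst (snd x)) / W (fst (snd x)))"
  define U2 where "U2 = (\<lambda>x::int\<times>real\<times>real. W (fst (snd x)) * snd (snd x))"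
  define V2 where "V2 = (\<lambda>x::int\<times>real\<times>real. qconj d (snd (snd x)) / W (fst (snd x)))"
  define \<pi> where "\<pi> = (\<lambda>x. ((nat \<lfloor>U1 x\<rfloor>, nat \<lfloor>V1 x\<rfloor>), (nat \<lfloor>U2 x\<rfloor>, nat \<lfloor>V2 x\<rfloor>)))"
  define K0 where "K0 = 1 / ((\<kappa> * \<kappa>) ^ m * (\<kappa> * \<kappa>) ^ n)"
  define A where "A = (\<lambda>(i::nat, j::nat). \<phi> m i * \<phi> m j)"
  define B where "B = (\<lambda>(i::nat, j::nat). \<phi> n i * \<phi> n j)"
  define G where "G = (\<lambda>(y1, y2). A y1 * B y2)"
  define g where "g = (\<lambda>y. K0 * G y)"
  define dd where "dd = of_int d / s"
  define Lb where "Lb = 2 + 2 * dd"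
  define M0 where "M0 = nat \<lfloor>Lb\<rfloor> + 1"
  define R where "R = (\<lambda>lo. {z::real. z \<in> \<int> \<and> lo \<le> z \<and> z \<le> lo + Lb})"
  have dd: "dd > 0" using s_pos d_gt1 by (simp add: dd_def)
  have Lb0: "Lb \<ge> 0" using dd by (simp add: Lb_def)
  have Rfin: "finite (R lo) \<and> card (R lo) \<le> M0" for lo
    using card_ints_interval[OF Lb0, of lo] by (simp add: R_def M0_def)
  have \<phi>0: "\<phi> p i \<ge> 0" for p i by (simp add: \<phi>_def)
  have \<phi>s: "\<phi> p summable_on UNIV" if "p \<ge> 2" for p
    using pseries_summable_on[OF that] by (simp add: \<phi>_def[abs_def])
  have m2: "m \<ge> 2" "n \<ge> 2" using n1 mn by auto
  have A0: "A z \<ge> 0" for z by (simp add: A_def \<phi>0 split: prod.splits)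
  have B0: "B z \<ge> 0" for z by (simp add: B_def \<phi>0 split: prod.splits)
  have Asum: "A summable_on UNIV" unfolding A_def
    by (rule summable_on_prod_nonneg) (use \<phi>s m2 \<phi>0 in auto)
  have Bsum: "B summable_on UNIV" unfolding B_def
    by (rule summable_on_prod_nonneg) (use \<phi>s m2 \<phi>0 in auto)
  have Gsum: "G summable_on UNIV" unfolding G_def
    by (rule summable_on_prod_nonneg[OF Asum Bsum A0 B0])
  have K0p: "K0 > 0" using kappa_pos by (simp add: K0_def)
  have gsum: "g summable_on UNIV" unfolding g_def by (rule summable_on_cmult_right[OF Gsum])
  have g0: "g y \<ge> 0" for y using K0p A0 B0 by (simp add: g_def G_def split: prod.splits)
  show ?thesis unfolding f_def[symmetric]
  proof (rule summable_bounded_fibers[where g = g and \<pi> = \<pi> and M = "M0 ^ 4", OF gsum g0])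
    fix x assume xS: "x \<in> SS"
    then obtain k \<alpha> \<beta> \<gamma> where x: "x = (k, \<alpha>, \<beta>)" and a: "\<alpha> \<in> C" and gC: "\<gamma> \<in> C"
      and b: "\<beta> = \<epsilon> powi k * \<gamma>" by (rule SS_elem)
    note F = facts[OF a gC b]
    define u1 where "u1 = W \<alpha> * \<alpha>"
    define v1 where "v1 = qconj d \<alpha> / W \<alpha>"
    define u2 where "u2 = W \<alpha> * \<beta>"
    define v2 where "v2 = qconj d \<beta> / W \<alpha>"
    define i1 where "i1 = nat \<lfloor>u1\<rfloor>"
    define j1 where "j1 = nat \<lfloor>v1\<rfloor>"
    define i2 where "i2 = nat \<lfloor>u2\<rfloor>"
    define j2 where "j2 = nat \<lfloor>v2\<rfloor>"
    have u1c: "cc \<le> u1" and v1c: "cc \<le> v1" using F by (simp_all add: u1_def v1_def)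
    have u2p: "0 \<le> u2" and v2p: "0 \<le> v2" using F by (simp_all add: u2_def v2_def)
    have cc0: "0 < cc" by (rule cc_pos)
    have l1: "\<kappa> * (1 + real i1) \<le> u1" unfolding i1_def using u1c cc0 by (intro lbnd) auto
    have l2: "\<kappa> * (1 + real j1) \<le> v1" unfolding j1_def using v1c cc0 by (intro lbnd) auto
    have l3: "\<kappa> * (1 + real i2) \<le> u1 + u2" unfolding i2_def using u1c u2p cc0 by (intro lbnd) auto
    have l4: "\<kappa> * (1 + real j2) \<le> v1 + v2" unfolding j2_def using v1c v2p cc0 by (intro lbnd) auto
    define a1 where "a1 = \<kappa> * (1 + real i1)"
    define a2 where "a2 = \<kappa> * (1 + real j1)"
    define a3 where "a3 = \<kappa> * (1 + real i2)"
    define a4 where "a4 = \<kappa> * (1 + real j2)"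
    have ap: "a1 > 0" "a2 > 0" "a3 > 0" "a4 > 0" using kappa_pos by (simp_all add: a1_def a2_def a3_def a4_def)
    have N1: "qnorm d \<alpha> = u1 * v1" using F by (simp add: u1_def v1_def)
    have N2: "qnorm d (\<alpha> + \<beta>) = (u1 + u2) * (v1 + v2)" using F by (simp add: u1_def v1_def u2_def v2_def)
    have P1: "a1 * a2 \<le> u1 * v1" using l1 l2 ap by (intro mult_mono) (auto simp: a1_def a2_def)
    have P2: "a3 * a4 \<le> (u1 + u2) * (v1 + v2)" using l3 l4 ap by (intro mult_mono) (auto simp: a3_def a4_def)
    have pos1: "(a1 * a2) ^ m * (a3 * a4) ^ n > 0" using ap by simp
    have "(a1 * a2) ^ m * (a3 * a4) ^ n \<le> (u1 * v1) ^ m * ((u1 + u2) * (v1 + v2)) ^ n"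
    proof -
      have q1: "(a1 * a2) ^ m \<le> (u1 * v1) ^ m" by (rule power_mono[OF P1]) (use ap in simp)
      have q2: "(a3 * a4) ^ n \<le> ((u1 + u2) * (v1 + v2)) ^ n" by (rule power_mono[OF P2]) (use ap in simp)
      have q3: "0 \<le> (u1 * v1) ^ m" using P1 ap
        by (metis less_le_trans mult_pos_pos zero_le_power less_imp_le)
      show ?thesis using q1 q2 q3 ap by (intro mult_mono) auto
    qed
    hence fle: "f x \<le> 1 / ((a1 * a2) ^ m * (a3 * a4) ^ n)"
      unfolding x f_def using pos1 by (simp add: N1 N2 frac_le)
    have fge: "f x \<ge> 0" unfolding x f_def using pos1 P1 P2
      by (simp add: N1 N2) (metis (no_types) less_le_trans mult_pos_pos ap zero_less_power less_imp_le)
    have "1 / ((a1 * a2) ^ m * (a3 * a4) ^ n) = K0 * ((\<phi> m i1 * \<phi> m j1) * (\<phi> n i2 * \<phi> n j2))"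
    proof -
      have e: "a1 * a2 = (\<kappa> * \<kappa>) * ((1 + real i1) * (1 + real j1))" by (simp add: a1_def a2_def mult_ac)
      have e': "a3 * a4 = (\<kappa> * \<kappa>) * ((1 + real i2) * (1 + real j2))" by (simp add: a3_def a4_def mult_ac)
      have nz: "(1 + real i) ^ p \<noteq> 0" for i p :: nat by (simp add: add_pos_nonneg)
      show ?thesis unfolding e e' using kappa_pos nz
        by (simp add: K0_def \<phi>_def power_mult_distrib)
    qed
    also have "\<dots> = g (\<pi> x)"
      by (simp add: g_def G_def A_def B_def \<pi>_def x U1_def V1_def U2_def V2_def i1_def j1_def i2_def j2_def
          u1_def v1_def u2_def v2_def)
    finally show "0 \<le> f x \<and> f x \<le> g (\<pi> x)" using fle fge by simp
  next
    fix y :: "(nat \<times> nat) \<times> (nat \<times> nat)"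
    obtain i1 j1 i2 j2 where y: "y = ((i1, j1), (i2, j2))" by (cases y) auto
    define FF where "FF = {x \<in> SS. \<pi> x = y}"
    define \<Phi> where "\<Phi> = (\<lambda>x. ((U1 x + V1 x, dd * (U1 x - V1 x)), (U2 x + V2 x, dd * (U2 x - V2 x))))"
    define PP where "PP = (R (real i1 + real j1) \<times> R (dd * (real i1 - real j1 - 1))) \<times>
                          (R (real i2 + real j2) \<times> R (dd * (real i2 - real j2 - 1)))"
    have finPP: "finite PP" using Rfin by (simp add: PP_def)
    have cardPP: "card PP \<le> M0 ^ 4"
    proof -
      have "card PP = card (R (real i1 + real j1)) * card (R (dd * (real i1 - real j1 - 1))) *
                  (card (R (real i2 + real j2)) * card (R (dd * (real i2 - real j2 - 1))))"
        by (simp add: PP_def card_cartesian_product)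
      also have "\<dots> \<le> M0 * M0 * (M0 * M0)" using Rfin by (intro mult_mono) auto
      also have "\<dots> = M0 ^ 4" by (simp add: power_def eval_nat_numeral)
      finally show ?thesis .
    qed
    have key: "U1 x + V1 x \<in> \<int> \<and> dd * (U1 x - V1 x) \<in> \<int> \<and> U2 x + V2 x \<in> \<int> \<and> dd * (U2 x - V2 x) \<in> \<int>
       \<and> U1 x > 0 \<and> V1 x > 0 \<and> U2 x > 0 \<and> V2 x > 0" if "x \<in> SS" for x
    proof -
      from that obtain k \<alpha> \<beta> \<gamma> where x: "x = (k, \<alpha>, \<beta>)" and a: "\<alpha> \<in> C" and gC: "\<gamma> \<in> C"
        and b: "\<beta> = \<epsilon> powi k * \<gamma>" by (rule SS_elem)
      note F = facts[OF a gC b]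
      have g1: "good (W \<alpha> * \<alpha>)" and g2: "good (W \<alpha> * \<beta>)" using F by (auto simp: Pg_def)
      have e1: "U1 x + V1 x = W \<alpha> * \<alpha> + qconj d (W \<alpha> * \<alpha>)" using F by (simp add: x U1_def V1_def)
      have e2: "dd * (U1 x - V1 x) = of_int d * (W \<alpha> * \<alpha> - qconj d (W \<alpha> * \<alpha>)) / s"
        using F by (simp add: x U1_def V1_def dd_def)
      have e3: "U2 x + V2 x = W \<alpha> * \<beta> + qconj d (W \<alpha> * \<beta>)" using F by (simp add: x U2_def V2_def)
      have e4: "dd * (U2 x - V2 x) = of_int d * (W \<alpha> * \<beta> - qconj d (W \<alpha> * \<beta>)) / s"
        using F by (simp add: x U2_def V2_def dd_def)
      have pos: "U1 x > 0 \<and> V1 x > 0 \<and> U2 x > 0 \<and> V2 x > 0"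
        using F by (auto simp: x U1_def V1_def U2_def V2_def Pg_def)
      show ?thesis using g1 g2 good_dl[OF g1] good_dl[OF g2] pos
        unfolding e1 e2 e3 e4 by (simp add: good_def)
    qed
    have sub: "\<Phi> ` FF \<subseteq> PP"
    proof
      fix z assume "z \<in> \<Phi> ` FF"
      then obtain x where xF: "x \<in> FF" and z: "z = \<Phi> x" by blast
      have xS: "x \<in> SS" and px: "\<pi> x = y" using xF by (auto simp: FF_def)
      note K = key[OF xS]
      have f1: "nat \<lfloor>U1 x\<rfloor> = i1" "nat \<lfloor>V1 x\<rfloor> = j1" "nat \<lfloor>U2 x\<rfloor> = i2" "nat \<lfloor>V2 x\<rfloor> = j2"
        using px by (simp_all add: \<pi>_def y)
      have b1: "real i1 \<le> U1 x" "U1 x < real i1 + 1" using floor_bounds[OF _ f1(1)] K by auto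
      have b2: "real j1 \<le> V1 x" "V1 x < real j1 + 1" using floor_bounds[OF _ f1(2)] K by auto
      have b3: "real i2 \<le> U2 x" "U2 x < real i2 + 1" using floor_bounds[OF _ f1(3)] K by auto
      have b4: "real j2 \<le> V2 x" "V2 x < real j2 + 1" using floor_bounds[OF _ f1(4)] K by auto
      have c1: "U1 x + V1 x \<in> R (real i1 + real j1)" using K b1 b2 by (simp add: R_def Lb_def) (use dd in linarith)
      have c3: "U2 x + V2 x \<in> R (real i2 + real j2)" using K b3 b4 by (simp add: R_def Lb_def) (use dd in linarith)
      have c2: "dd * (U1 x - V1 x) \<in> R (dd * (real i1 - real j1 - 1))"
      proof -
        have "dd * (real i1 - real j1 - 1) \<le> dd * (U1 x - V1 x)"
          using b1 b2 dd by (intro mult_left_mono) auto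
        moreover have "dd * (U1 x - V1 x) \<le> dd * (real i1 - real j1 - 1) + 2 * dd"
          using b1 b2 dd mult_left_mono[of "U1 x - V1 x" "real i1 - real j1 - 1 + 2" dd]
          by (simp add: algebra_simps)
        ultimately show ?thesis using K by (simp add: R_def Lb_def)
      qed
      have c4: "dd * (U2 x - V2 x) \<in> R (dd * (real i2 - real j2 - 1))"
      proof -
        have "dd * (real i2 - real j2 - 1) \<le> dd * (U2 x - V2 x)"
          using b3 b4 dd by (intro mult_left_mono) auto
        moreover have "dd * (U2 x - V2 x) \<le> dd * (real i2 - real j2 - 1) + 2 * dd"
          using b3 b4 dd mult_left_mono[of "U2 x - V2 x" "real i2 - real j2 - 1 + 2" dd]
          by (simp add: algebra_simps)
        ultimately show ?thesis using K by (simp add: R_def Lb_def)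
      qed
      show "z \<in> PP" using c1 c2 c3 c4 by (simp add: z \<Phi>_def PP_def)
    qed
    have inj: "inj_on \<Phi> FF"
    proof (rule inj_onI)
      fix x x' assume xF: "x \<in> FF" and xF': "x' \<in> FF" and e: "\<Phi> x = \<Phi> x'"
      have xS: "x \<in> SS" and xS': "x' \<in> SS" using xF xF' by (auto simp: FF_def)
      have rec: "U = ((U + V) + (dd * (U - V)) / dd) / 2" for U V using dd by (simp add: field_simps)
      from e have "U1 x + V1 x = U1 x' + V1 x'" "dd * (U1 x - V1 x) = dd * (U1 x' - V1 x')"
        "U2 x + V2 x = U2 x' + V2 x'" "dd * (U2 x - V2 x) = dd * (U2 x' - V2 x')"
        by (simp_all add: \<Phi>_def)
      hence eU1: "U1 x = U1 x'" and eU2: "U2 x = U2 x'" using rec[of "U1 x" "V1 x"] rec[of "U1 x'" "V1 x'"]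
          rec[of "U2 x" "V2 x"] rec[of "U2 x'" "V2 x'"] by metis+
      obtain k \<alpha> \<beta> where x: "x = (k, \<alpha>, \<beta>)" by (cases x) auto
      obtain k' \<alpha>' \<beta>' where x': "x' = (k', \<alpha>', \<beta>')" by (cases x') auto
      show "x = x'" unfolding x x'
        by (rule SS_inj) (use xS xS' eU1 eU2 in \<open>simp_all add: x x' U1_def U2_def\<close>)
    qed
    have "finite FF" using inj_on_finite[OF inj sub finPP] .
    moreover have "card FF \<le> M0 ^ 4" using card_inj_on_le[OF inj sub finPP] cardPP by simp
    ultimately show "finite {x \<in> SS. \<pi> x = y} \<and> card {x \<in> SS. \<pi> x = y} \<le> M0 ^ 4"
      by (simp add: FF_def)
  qed
qed

end

theorem mainTheorem11:
  fixes d :: int and \<epsilon> :: real and C :: "real set" and m n :: nat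
  assumes "squarefree d" and "d > 1"
    and gen: "qunits_pos d = {\<epsilon> powi k | k. True}"
    and \<epsilon>_unit: "\<epsilon> \<in> qunits_pos d"
    and C_sub: "C \<subseteq> qints_pos d"
    and C_rep: "\<forall>\<alpha>\<in>qints_pos d. \<exists>!c. c \<in> C \<and> (\<exists>u\<in>qunits_pos d. \<alpha> = u * c)"
    and "n > 1" and "m > n"
  shows "(\<lambda>(k::int, \<alpha>, \<beta>). 1 / (qnorm d \<alpha> ^ m * qnorm d (\<alpha> + \<beta>) ^ n))
           summable_on {(k, \<alpha>, \<beta>). \<alpha> \<in> C \<and> \<beta> \<in> (\<lambda>x. \<epsilon> powi k * x) ` C}"
proof -
  interpret qmain d \<epsilon> C m n
    using assms by unfold_locales auto
  show ?thesis using main_summable by (simp add: SS_def)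
qed

end
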